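(* There is an absolute constant $\delta_0>0$ such that the following holds. Let $0<\delta_1<\delta_0$ and $0<\delta_2<\delta_1^3$ with $\delta_1/\delta_2\in\mathbb{N}$, and let $m\in\mathbb{N}\cup\{\infty\}$. Partition $\mathbb{C}/\mathbb{Z}[i]$ into finitely many sets each of diameter at most $\delta_2$, and color each $x=(a_1,a_2,\dots)\in\ell^1(\mathbb{N}_{\le m};\mathbb{R}/\mathbb{Z})$ by the part containing $F(x)=\sum_{j}(e(a_j)-1)\bmod\mathbb{Z}[i]$. Then for all $x,s\in\ell^1(\mathbb{N}_{\le m};\mathbb{R}/\mathbb{Z})$ with $s\in S_m$, the elements $x$, $x+s$, $x+2s$ do not all receive the same color.
   Context: $\|x\|_{\mathbb{R}/\mathbb{Z}}$ is the distance from $x$ to the nearest integer; $e(x)=e^{2\pi i x}$ for $x\in\mathbb{R}/\mathbb{Z}$. For $m\in\mathbb{N}$, $\ell^1(\mathbb{N}_{\le m};\mathbb{R}/\mathbb{Z})$ is $(\mathbb{R}/\mathbb{Z})^m$ with norm $\sum_{i\le m}\|a_i\|_{\mathbb{R}/\mathbb{Z}}$; for $m=\infty$ it is the group $\ell^1(\mathbb{N};\mathbb{R}/\mathbb{Z})$ of sequences in $\mathbb{R}/\mathbb{Z}$ with $\sum_i\|a_i\|_{\mathbb{R}/\mathbb{Z}}<\infty$ (so the sum defining $F$ converges since $|e(a)-1|\le 2\pi\|a\|_{\mathbb{R}/\mathbb{Z}}$). Diameters in $\mathbb{C}/\mathbb{Z}[i]$ are with respect to the quotient metric. Let $\eta_m=2^{-100m}$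 for $m\in\mathbb{N}$ and $\eta_\infty=0$. $S_m$ is the set of $(a_1,a_2,\dots)\in\ell^1(\mathbb{N}_{\le m};\mathbb{R}/\mathbb{Z})$ for which there is an index $i$ with: (1) $a_i\in(-\delta_1-(2-\eta_m)\delta_2,\,-\delta_1+(2-\eta_m)\delta_2)\subset\mathbb{R}/\mathbb{Z}$; (2) for all $j\ne i$, $a_j\in(-(2-\eta_m)\delta_2,(2-\eta_m)\delta_2)\subset\mathbb{R}/\mathbb{Z}$; (3) $\delta_1-(2-\eta_m)\delta_2<\sum_{j\ne i}\|a_j\|_{\mathbb{R}/\mathbb{Z}}<\delta_1+(2-\eta_m)\delta_2$. *)

theory Defs
  imports "HOL-Analysis.Analysis" "HOL-Library.Extended_Nat"
begin

text \<open>Elements of R/Z are represented by real representatives; all notions below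
are invariant under integer shifts.\<close>

definition rz_norm :: "real \<Rightarrow> real" where
  "rz_norm a = \<bar>a - of_int (round a)\<bar>"

definition e :: "real \<Rightarrow> complex" where
  "e x = exp (2 * of_real pi * \<i> * of_real x)"

definition idx :: "enat \<Rightarrow> nat set" where
  "idx m = {i. 1 \<le> i \<and> enat i \<le> m}"

definition ell1 :: "enat \<Rightarrow> (nat \<Rightarrow> real) set" where
  "ell1 m = {a. (\<forall>i. i \<notin> idx m \<longrightarrow> a i = 0) \<and> summable (\<lambda>i. rz_norm (a i))}"

definition eta :: "enat \<Rightarrow> real" where
  "eta m = (case m of enat n \<Rightarrow> 2 powr (- 100 * real n) | \<infinity> \<Rightarrow> 0)"

definition in_arc :: "real \<Rightarrow> real \<Rightarrow> real \<Rightarrow> bool" where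
  "in_arc c r a \<longleftrightarrow> (\<exists>k::int. c - r < a + of_int k \<and> a + of_int k < c + r)"

definition S_set :: "real \<Rightarrow> real \<Rightarrow> enat \<Rightarrow> (nat \<Rightarrow> real) set" where
  "S_set \<delta>1 \<delta>2 m = {a \<in> ell1 m. \<exists>i \<in> idx m.
      in_arc (- \<delta>1) ((2 - eta m) * \<delta>2) (a i) \<and>
      (\<forall>j \<in> idx m. j \<noteq> i \<longrightarrow> in_arc 0 ((2 - eta m) * \<delta>2) (a j)) \<and>
      \<delta>1 - (2 - eta m) * \<delta>2 < (\<Sum>j. if j = i then 0 else rz_norm (a j)) \<and>
      (\<Sum>j. if j = i then 0 else rz_norm (a j)) < \<delta>1 + (2 - eta m) * \<delta>2}"

text \<open>F(x) = sum_j (e(a_j) - 1), a representative in C of the class mod Z[i].\<close>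
definition F :: "(nat \<Rightarrow> real) \<Rightarrow> complex" where
  "F a = (\<Sum>j. e (a j) - 1)"

definition gauss_int :: "complex \<Rightarrow> bool" where
  "gauss_int g \<longleftrightarrow> Re g \<in> \<int> \<and> Im g \<in> \<int>"

definition qdist :: "complex \<Rightarrow> complex \<Rightarrow> real" where
  "qdist z w = Inf {cmod (z - w - g) | g. gauss_int g}"

text \<open>A coloring of C/Z[i] coming from a partition into finitely many parts, each of
(quotient) diameter at most d: a Z[i]-periodic function with finitely many values
whose colour classes have all pairwise quotient distances at most d.\<close>
definition admissible_coloring :: "real \<Rightarrow> (complex \<Rightarrow> nat) \<Rightarrow> bool" where
  "admissible_coloring d col \<longleftrightarrow>
     (\<forall>z g. gauss_int g \<longrightarrow> col (z + g) = col z) \<and>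
     finite (range col) \<and>
     (\<forall>z w. col z = col w \<longrightarrow> qdist z w \<le> d)"

end

theory Submission
  imports Defs
begin

lemma e_alt: "e a = exp (\<i> * of_real (2*pi*a))"
  unfolding e_def by (simp add: algebra_simps)

lemma e_add: "e (a + b) = e a * e b"
  unfolding e_def by (simp add: distrib_left exp_add)

lemma e_int: "e (of_int k) = 1"
proof -
  have "2 * complex_of_real pi * \<i> * complex_of_real (of_int k) = \<i> * (of_int k * (of_real pi * 2))"
    by (simp only: of_real_of_int_eq mult_ac)
  then show ?thesis unfolding e_def by (simp only: exp_2pi_1_int)
qed

lemma e_shift: "e (a + of_int k) = e a"
  by (simp add: e_add e_int)

lemma e_norm: "cmod (e a) = 1"
  unfolding e_alt by (simp add: norm_exp_i_times)

lemma e_sub1_eq: "cmod (e a - 1) = 2 * \<bar>sin (pi * a)\<bar>"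
  unfolding e_alt dist_exp_i_1 by simp

lemma e_sub1_le: "cmod (e a - 1) \<le> 2 * pi * \<bar>a\<bar>"
  unfolding e_sub1_eq using abs_sin_x_le_abs_x[of "pi*a"] by (simp add: abs_mult)

lemma e_sub1_ge: assumes "pi * \<bar>a\<bar> \<le> 1" shows "pi * \<bar>a\<bar> \<le> cmod (e a - 1)"
proof -
  have b: "\<bar>sin (pi*a) - pi*a\<bar> \<le> (pi*a)^2/2"
    using Maclaurin_sin_bound[of "pi*a" 2] by (simp add: sin_coeff_def numeral_2_eq_2 power2_abs)
  have "(pi*a)^2 = (pi*\<bar>a\<bar>) * (pi*\<bar>a\<bar>)" by (simp add: power2_eq_square abs_mult_self_eq)
  also have "\<dots> \<le> pi*\<bar>a\<bar>" using assms by (simp add: mult_le_one mult_left_le)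
  finally have "\<bar>sin (pi*a)\<bar> \<ge> pi*\<bar>a\<bar>/2" using b by (auto simp: abs_mult abs_if split: if_splits)
  then show ?thesis unfolding e_sub1_eq by simp
qed

lemma e_sub1_shift: "cmod (e a - 1) \<le> 2 * pi * \<bar>a + of_int k\<bar>"
  using e_sub1_le[of "a + of_int k"] by (simp add: e_shift)

lemma e_sub1_rz: "cmod (e a - 1) \<le> 2 * pi * rz_norm a"
  using e_sub1_shift[of a "- round a"] unfolding rz_norm_def by simp

lemma rz_nonneg: "0 \<le> rz_norm a" unfolding rz_norm_def by simp

lemma summable_e: "summable (\<lambda>j. rz_norm (a j)) \<Longrightarrow> summable (\<lambda>j. norm (e (a j) - 1))"
  apply (rule summable_comparison_test[where g="\<lambda>j. 2*pi*rz_norm (a j)"])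
  using e_sub1_rz by (auto intro: summable_mult)

lemma int_small: "\<bar>(of_int a::real)\<bar> < 1 \<Longrightarrow> a = 0"
proof -
  assume h: "\<bar>(of_int a::real)\<bar> < 1"
  have "(of_int \<bar>a\<bar>::real) < of_int 1" using h by simp
  then have "\<bar>a\<bar> < 1" by (simp only: of_int_less_iff)
  then show "a = 0" by simp
qed

lemma gauss_small: "gauss_int g \<Longrightarrow> cmod g < 1 \<Longrightarrow> g = 0"
proof -
  assume g: "gauss_int g" "cmod g < 1"
  have R: "Re g \<in> \<int>" and I: "Im g \<in> \<int>" using g(1) unfolding gauss_int_def by simp_all
  obtain a :: int where a: "Re g = of_int a" using R by (rule Ints_cases)
  obtain b :: int where b: "Im g = of_int b" using I by (rule Ints_cases)
  have "\<bar>Re g\<bar> < 1" using abs_Re_le_cmod[of g] g(2) by linarith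
  then have "a = 0" using a int_small by simp
  have "\<bar>Im g\<bar> < 1" using abs_Im_le_cmod[of g] g(2) by linarith
  then have "b = 0" using b int_small by simp
  show ?thesis using a b \<open>a = 0\<close> \<open>b = 0\<close> by (simp add: complex_eq_iff)
qed

lemma gauss_comb: "gauss_int a \<Longrightarrow> gauss_int b \<Longrightarrow> gauss_int (2*a - b)"
  unfolding gauss_int_def by (simp add: Ints_diff Ints_mult)

lemma qdist_ex: assumes "qdist z w \<le> d" "0 < r" shows "\<exists>g. gauss_int g \<and> cmod (z - w - g) < d + r"
proof -
  define X where "X = {cmod (z - w - g) | g. gauss_int g}"
  have "gauss_int 0" unfolding gauss_int_def by simp
  then have "cmod (z - w - 0) \<in> X" unfolding X_def by blast
  then have ne: "X \<noteq> {}" by blast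
  have "Inf X < d + r" using assms unfolding qdist_def X_def by simp
  from cInf_lessD[OF ne this] obtain y where "y \<in> X" "y < d + r" by blast
  then show ?thesis unfolding X_def by blast
qed

lemma e_sub1_add: "cmod (e (a + b) - 1) \<le> cmod (e a - 1) + cmod (e b - 1)"
proof -
  have eq: "e (a + b) - 1 = e a * (e b - 1) + (e a - 1)" by (simp add: e_add algebra_simps)
  show ?thesis unfolding eq
    by (rule order_trans[OF norm_triangle_ineq]) (simp add: norm_mult e_norm)
qed

lemma final_arith1: fixes P d1 d2 :: real
  assumes F1: "(pi*d1/2)^2 - 8*pi^2*d2 * (d1 + 2*d2) < 6 * d2"
  and F2: "6 * d2 \<le> 6 * (d1^2/100)"
  and E: "8*pi^2*d2 * (d1 + 2*d2) \<le> 8*pi^2 * (d1^2/50)"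
  and P1: "(pi*d1/2)^2 = P/4" and P2: "8*pi^2 * (d1^2/50) = P * (8/50)"
  shows "P/4 - P*(8/50) < 6 * (d1^2/100)" using F1 F2 E P1 P2 by linarith

lemma final_arith2: fixes P d1 :: real
  shows "P/4 - P*(8/50) < 6 * (d1^2/100) \<Longrightarrow> 0 < d1^2 \<Longrightarrow> 9 * d1^2 \<le> P \<Longrightarrow> False"
  by linarith

lemma key:
  fixes d1 d2 :: real
  assumes d1: "0 < d1" "d1 < 1/100" and d2: "0 < d2" "d2 < d1^3"
    and x: "x \<in> ell1 m" and s: "s \<in> S_set d1 d2 m"
    and q1: "qdist (F x) (F (\<lambda>j. x j + s j)) \<le> d2"
    and q2: "qdist (F x) (F (\<lambda>j. x j + 2 * s j)) \<le> d2"
  shows False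
proof -
  define r where "r = (2 - eta m) * d2"
  have eta0: "0 \<le> eta m" unfolding eta_def by (cases m) auto
  have r2: "r \<le> 2*d2" using eta0 d2 unfolding r_def by (simp add: algebra_simps)
  from s obtain i where i: "i \<in> idx m" "in_arc (-d1) r (s i)"
      "\<forall>j\<in>idx m. j\<noteq>i \<longrightarrow> in_arc 0 r (s j)"
      "(\<Sum>j. if j = i then 0 else rz_norm (s j)) < d1 + r"
    and sell: "s \<in> ell1 m"
    unfolding S_set_def r_def by auto
  from i(2) obtain k::int where k: "-d1 - r < s i + k" "s i + k < -d1 + r" unfolding in_arc_def by auto
  define t where "t = s i + of_int k"
  have dsq: "d1*d1 \<le> (1/100)*(1/100)" using mult_mono[of d1 "1/100" d1 "1/100"] d1 by auto
  have dd: "d1*d1 \<le> 1/4" using dsq by simp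
  have d13: "d1^3 \<le> d1/4" using dd d1 by (simp add: power3_eq_cube mult_left_mono[of "d1*d1" "1/4" d1, simplified])
  have d21: "d2 \<le> d1/4" using d13 d2 by linarith
  have tlow: "d1/2 \<le> \<bar>t\<bar>" and thigh: "\<bar>t\<bar> \<le> 3*d1" using k r2 d21 d1 unfolding t_def by auto
  define c where "c j = cmod (e (s j) - 1)" for j
  have c0: "0 \<le> c j" for j unfolding c_def by simp
  have cit: "c i = cmod (e t - 1)" unfolding c_def t_def by (simp add: e_shift)
  have pit: "pi * \<bar>t\<bar> \<le> 1" using thigh d1 pi_less_4 mult_mono[of pi 4 "\<bar>t\<bar>" "3/100"] by auto
  have ci_ge: "pi*d1/2 \<le> c i" proof -
    have "pi*(d1/2) \<le> pi*\<bar>t\<bar>" by (rule mult_left_mono[OF tlow]) simp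
    moreover have "pi*d1/2 = pi*(d1/2)" by simp
    ultimately show ?thesis using e_sub1_ge[OF pit] unfolding cit by linarith
  qed
  have ci_le: "c i \<le> 2*pi*(3*d1)" proof -
    have "2*pi*\<bar>t\<bar> \<le> 2*pi*(3*d1)" by (rule mult_left_mono[OF thigh]) simp
    then show ?thesis using e_sub1_le[of t] unfolding cit by linarith
  qed
  have cj: "c j \<le> 4*pi*d2" if "j \<noteq> i" for j
  proof (cases "j \<in> idx m")
    case True
    then have "in_arc 0 r (s j)" using i(3) that by auto
    then obtain kj::int where kj: "0 - r < s j + kj" "s j + kj < 0 + r" unfolding in_arc_def by blast
    then have "\<bar>s j + kj\<bar> \<le> 2*d2" using r2 by (simp add: abs_le_iff)
    then show ?thesis proof -
      have "2*pi*\<bar>s j + kj\<bar> \<le> 2*pi*(2*d2)" by (rule mult_left_mono[OF \<open>\<bar>s j + kj\<bar> \<le> 2*d2\<close>]) simp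
      then show ?thesis using e_sub1_shift[of "s j" kj] unfolding c_def by linarith
    qed
  next
    case False
    then have "s j = 0" using sell unfolding ell1_def by auto
    then show ?thesis unfolding c_def e_def using d2 by simp
  qed
  have crz: "c j \<le> 2*pi*rz_norm (s j)" for j unfolding c_def by (rule e_sub1_rz)
  have srz: "summable (\<lambda>j. rz_norm (s j))" using sell unfolding ell1_def by auto
  have xrz: "summable (\<lambda>j. rz_norm (x j))" using x unfolding ell1_def by auto
  define R where "R j = (if j = i then 0 else rz_norm (s j))" for j
  have R0: "0 \<le> R j" for j unfolding R_def by (simp add: rz_nonneg)
  have sumR: "summable R"
    by (rule summable_comparison_test[OF _ srz]) (auto simp: R_def rz_nonneg)
  have sumRlt: "suminf R \<le> d1 + 2*d2" using i(4) r2 unfolding R_def by simp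
  define w where "w j = e (x j) * (e (s j) - 1)^2" for j
  have nw: "norm (w j) = c j ^ 2" for j unfolding w_def c_def by (simp add: norm_mult norm_power e_norm)
  define W where "W j = (if j = i then 0 else w j)" for j
  have nW: "norm (W j) \<le> 8*pi^2*d2 * R j" for j
  proof (cases "j = i")
    case True then show ?thesis by (simp add: W_def R_def)
  next
    case False
    have "norm (W j) = c j * c j" using False by (simp add: W_def nw power2_eq_square)
    also have "\<dots> \<le> (4*pi*d2) * (2*pi*rz_norm (s j))"
      by (rule mult_mono) (use cj[OF False] crz c0 d2 in auto)
    also have "\<dots> = 8*pi^2*d2 * R j" using False by (simp add: R_def power2_eq_square)
    finally show ?thesis .
  qed
  have sumnW: "summable (\<lambda>j. norm (W j))"
    by (rule summable_comparison_test[where g="\<lambda>j. 8*pi^2*d2 * R j"]) (use nW sumR in \<open>auto intro: summable_mult\<close>)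
  have sumW: "summable W" using sumnW summable_norm_cancel by blast
  have "norm (suminf W) \<le> (\<Sum>j. norm (W j))" using summable_norm[OF sumnW] .
  also have "\<dots> \<le> (\<Sum>j. 8*pi^2*d2 * R j)"
    by (rule suminf_le) (use nW sumnW sumR in \<open>auto intro: summable_mult\<close>)
  also have "\<dots> = 8*pi^2*d2 * suminf R" using suminf_mult[OF sumR] by simp
  also have "\<dots> \<le> 8*pi^2*d2 * (d1 + 2*d2)" using sumRlt d2 by (simp add: mult_left_mono)
  finally have nsW: "norm (suminf W) \<le> 8*pi^2*d2 * (d1 + 2*d2)" .
  have "(\<lambda>j. W j + (if j = i then w j else 0)) sums (suminf W + w i)"
    by (rule sums_add[OF summable_sums[OF sumW] sums_single])
  moreover have "(\<lambda>j. W j + (if j = i then w j else 0)) = w" by (auto simp: W_def)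
  ultimately have wsums: "w sums (suminf W + w i)" by simp
  define f0 where "f0 j = e (x j) - 1" for j
  define f1 where "f1 j = e (x j + s j) - 1" for j
  define f2 where "f2 j = e (x j + 2 * s j) - 1" for j
  have ns0: "summable (\<lambda>j. norm (f0 j))" unfolding f0_def using summable_e[OF xrz] .
  have nss: "summable (\<lambda>j. norm (e (s j) - 1))" using summable_e[OF srz] .
  have ns1: "summable (\<lambda>j. norm (f1 j))"
    by (rule summable_comparison_test[where g="\<lambda>j. norm (f0 j) + norm (e (s j) - 1)"])
       (use ns0 nss e_sub1_add in \<open>auto simp: f0_def f1_def intro: summable_add\<close>)
  have ns2: "summable (\<lambda>j. norm (f2 j))"
  proof (rule summable_comparison_test[where g="\<lambda>j. norm (f1 j) + norm (e (s j) - 1)"])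
    show "\<exists>N. \<forall>n\<ge>N. norm (norm (f2 n)) \<le> norm (f1 n) + cmod (e (s n) - 1)"
    proof (intro exI allI impI)
      fix n :: nat
      have "x n + 2 * s n = (x n + s n) + s n" by simp
      then have "f2 n = e ((x n + s n) + s n) - 1" unfolding f2_def by (simp only:)
      then show "norm (norm (f2 n)) \<le> norm (f1 n) + cmod (e (s n) - 1)"
        using e_sub1_add[of "x n + s n" "s n"] unfolding f1_def by simp
    qed
  qed (use ns1 nss in \<open>auto intro: summable_add\<close>)
  have S0: "f0 sums F x" unfolding F_def f0_def[symmetric]
    using summable_sums[OF summable_norm_cancel[OF ns0]] .
  have S1: "f1 sums F (\<lambda>j. x j + s j)" unfolding F_def f1_def[symmetric]
    using summable_sums[OF summable_norm_cancel[OF ns1]] .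
  have S2: "f2 sums F (\<lambda>j. x j + 2 * s j)" unfolding F_def f2_def[symmetric]
    using summable_sums[OF summable_norm_cancel[OF ns2]] .
  have "(\<lambda>j. f2 j - 2 * f1 j + f0 j) sums (F (\<lambda>j. x j + 2 * s j) - 2 * F (\<lambda>j. x j + s j) + F x)"
    by (intro sums_add sums_diff sums_mult S0 S1 S2)
  moreover have "(\<lambda>j. f2 j - 2 * f1 j + f0 j) = w"
  proof
    fix j
    have "x j + 2 * s j = (x j + s j) + s j" by simp
    then have "e (x j + 2 * s j) = e (x j) * e (s j) * e (s j)"
      by (simp only: e_add)
    then show "f2 j - 2 * f1 j + f0 j = w j"
      unfolding f0_def f1_def f2_def w_def by (simp add: e_add algebra_simps power2_eq_square)
  qed
  ultimately have wsums2: "w sums (F (\<lambda>j. x j + 2 * s j) - 2 * F (\<lambda>j. x j + s j) + F x)" by simp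
  define D where "D = suminf W + w i"
  have Deq: "D = F (\<lambda>j. x j + 2 * s j) - 2 * F (\<lambda>j. x j + s j) + F x"
    using sums_unique2[OF wsums wsums2] unfolding D_def .
  obtain g1 where g1: "gauss_int g1" "cmod (F x - F (\<lambda>j. x j + s j) - g1) < d2 + d2"
    using qdist_ex[OF q1 d2(1)] by auto
  obtain g2 where g2: "gauss_int g2" "cmod (F x - F (\<lambda>j. x j + 2 * s j) - g2) < d2 + d2"
    using qdist_ex[OF q2 d2(1)] by auto
  define A1 where "A1 = F x - F (\<lambda>j. x j + s j) - g1"
  define A2 where "A2 = F x - F (\<lambda>j. x j + 2 * s j) - g2"
  have eqD: "D - (2*g1 - g2) = 2 * A1 - A2"
    unfolding Deq A1_def A2_def by (simp add: algebra_simps)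
  have "cmod (2 * A1 - A2) \<le> cmod (2 * A1) + cmod A2" by (rule norm_triangle_ineq4)
  also have "cmod (2 * A1) = 2 * cmod A1" by (simp add: norm_mult)
  finally have tri: "cmod (D - (2*g1 - g2)) \<le> 2 * cmod A1 + cmod A2" unfolding eqD .
  have "cmod A1 < 2 * d2" "cmod A2 < 2 * d2" using g1(2) g2(2) unfolding A1_def A2_def by simp_all
  with tri have Dg: "cmod (D - (2*g1 - g2)) < 6 * d2" by linarith
  have nD_le: "cmod D \<le> c i ^ 2 + 8*pi^2*d2 * (d1 + 2*d2)"
    unfolding D_def using nsW nw[of i] norm_triangle_ineq[of "suminf W" "w i"] by simp
  have nD_ge: "c i ^ 2 - 8*pi^2*d2 * (d1 + 2*d2) \<le> cmod D"
    unfolding D_def using nsW nw[of i] norm_triangle_ineq2[of "w i" "- suminf W"] by (simp add: add.commute)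
  have P9: "9 \<le> pi^2" using mult_mono[of 3 pi 3 pi] pi_gt3 by (simp add: power2_eq_square)
  have P16: "pi^2 \<le> 16" using mult_mono[of pi 4 pi 4] pi_less_4 pi_gt_zero by (simp add: power2_eq_square)
  have h1: "d2 * (d1 + 2*d2) \<le> d1^3 * (2*d1)"
    by (rule mult_mono) (use d2 d21 d1 in auto)
  have h2: "d1^3 * (2*d1) \<le> d1^2 / 50"
  proof -
    have "d1^3 * (2*d1) = d1^2 * (2 * (d1*d1))" by (simp add: power2_eq_square power3_eq_cube)
    also have "\<dots> \<le> d1^2 * (1/50)" using d1 dsq by (intro mult_left_mono) auto
    finally show ?thesis by simp
  qed
  have h3: "d1^3 \<le> d1^2 / 100"
  proof -
    have "d1^3 = d1^2 * d1" by (simp add: power2_eq_square power3_eq_cube)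
    also have "\<dots> \<le> d1^2 * (1/100)" using d1 by (intro mult_left_mono) auto
    finally show ?thesis by simp
  qed
  have E: "8*pi^2*d2 * (d1 + 2*d2) \<le> 8*pi^2 * (d1^2/50)"
    using h1 h2 by (simp add: mult_left_mono)
  have ci2_ge: "(pi*d1/2)^2 \<le> c i ^ 2" using ci_ge d1 by (intro power_mono) auto
  have ci2_le: "c i ^ 2 \<le> (2*pi*(3*d1))^2" using ci_le c0 by (intro power_mono) auto
  have smallD: "cmod D < 1/2"
  proof -
    have "(2*pi*(3*d1))^2 = 36 * (pi^2 * d1^2)" by (simp add: power_mult_distrib)
    moreover have "d1^2 \<le> 1/10000" using dsq by (simp add: power2_eq_square)
    moreover have pd: "pi^2 * d1^2 \<le> 16 * (1/10000)"
      using mult_mono[of "pi^2" 16 "d1^2" "1/10000"] P16 \<open>d1^2 \<le> 1/10000\<close> by simp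
    ultimately have a1: "(2*pi*(3*d1))^2 \<le> 36 * 16 / 10000" by simp
    have "8*pi^2 * (d1^2/50) = (8/50) * (pi^2 * d1^2)" by simp
    also have "\<dots> \<le> (8/50) * (16 * (1/10000))" using pd by simp
    finally have a2: "8*pi^2*d2 * (d1 + 2*d2) \<le> (8/50) * (16 * (1/10000))" using E by linarith
    have "cmod D \<le> 36 * 16 / 10000 + (8/50) * (16 * (1/10000))"
      using nD_le ci2_le a1 a2 by linarith
    then show ?thesis by simp
  qed
  have "6 * d2 < 1/2" using d21 d1 by linarith
  moreover have "cmod (2*g1 - g2) \<le> cmod D + cmod (D - (2*g1 - g2))"
    using norm_triangle_ineq4[of D "D - (2*g1 - g2)"] by simp
  ultimately have "cmod (2*g1 - g2) < 1" using Dg smallD by linarith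
  then have g0: "2*g1 - g2 = 0" by (rule gauss_small[OF gauss_comb[OF g1(1) g2(1)]])
  have D6: "cmod D < 6 * d2" using Dg unfolding g0 by simp
  have F1: "(pi*d1/2)^2 - 8*pi^2*d2 * (d1 + 2*d2) < 6 * d2" using ci2_ge nD_ge D6 by linarith
  have F2: "6 * d2 \<le> 6 * (d1^2/100)" using d2 h3 by linarith
  define P where "P = pi^2 * d1^2"
  have P1: "(pi*d1/2)^2 = P/4" unfolding P_def by (simp add: power_mult_distrib power_divide)
  have P2: "8*pi^2 * (d1^2/50) = P * (8/50)" unfolding P_def by simp
  have P3: "9 * d1^2 \<le> P" unfolding P_def using P9 by (intro mult_right_mono) auto
  have "0 < d1^2" using d1 by simp
  then show False using final_arith2[OF final_arith1[OF F1 F2 E P1 P2]] P3 by blast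
qed

theorem mainTheorem4:
  shows "\<exists>\<delta>0 > (0::real). \<forall>\<delta>1 \<delta>2 (m::enat) col.
     0 < \<delta>1 \<and> \<delta>1 < \<delta>0 \<and> 0 < \<delta>2 \<and> \<delta>2 < \<delta>1 ^ 3 \<and>
     (\<exists>n::nat. \<delta>1 / \<delta>2 = real n) \<and> admissible_coloring \<delta>2 col \<longrightarrow>
     (\<forall>x \<in> ell1 m. \<forall>s \<in> S_set \<delta>1 \<delta>2 m.
        \<not> (col (F x) = col (F (\<lambda>j. x j + s j)) \<and>
           col (F x) = col (F (\<lambda>j. x j + 2 * s j))))"
proof (intro exI[of _ "1/100"] conjI allI impI ballI notI)
  fix d1 d2 :: real and m col x s
  assume h: "0 < d1 \<and> d1 < 1/100 \<and> 0 < d2 \<and> d2 < d1 ^ 3 \<and>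
     (\<exists>n::nat. d1 / d2 = real n) \<and> admissible_coloring d2 col"
    and x: "x \<in> ell1 m" and s: "s \<in> S_set d1 d2 m"
    and c: "col (F x) = col (F (\<lambda>j. x j + s j)) \<and> col (F x) = col (F (\<lambda>j. x j + 2 * s j))"
  from h have adm: "\<forall>z w. col z = col w \<longrightarrow> qdist z w \<le> d2" unfolding admissible_coloring_def by blast
  show False
    by (rule key[of d1 d2 x m s]) (use h x s c adm in auto)
qed (simp)

end
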